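(* The exact sequence \[0\to\mathbb Z\to\mathbb Z[\tfrac12]\to\mathbb Z(2^\infty)\to0\] (inclusion followed by the quotient map $\mathbb Z[\tfrac12]\to\mathbb Z[\tfrac12]/\mathbb Z=\mathbb Z(2^\infty)$) is coarsely split. Moreover, the metric $d_{\mathbb Z}$ in the definition of coarse splitting can be chosen to be the standard word metric $d_{\mathbb Z}(a,b)=|a-b|$.
   Context: $\mathbb Z[\tfrac12]=\{m/2^k:m\in\mathbb Z,k\ge0\}$; $\mathbb Z(2^\infty)=\varinjlim(\mathbb Z_2\to\mathbb Z_4\to\cdots)\cong\mathbb Z[\tfrac12]/\mathbb Z$. A proper left invariant metric is $d(g,h)=\|g^{-1}h\|$ for a proper norm ($\|g\|=0$ iff $g$ trivial, symmetric, subadditive, finite balls). An exact sequence $0\to K\overset{i}{\to}G\overset{\pi}{\to}Q\to0$ is coarsely split if there are proper left invariant metrics $d_K,d_G,d_Q$ and a coarse equivalence $f:(G,d_G)\to(K\oplus Q,d_K\oplus d_Q)$ ($\ell_1$ sum metric) with $f\circ i$ at bounded distance from $k\mapsto(k,0)$ and $\pi'\circ f$ at bounded distance from $\pi$, $\pi'$ the projection onto $Q$. Coarse maps: for each $\delta$ there is $\epsilon$ with $d(x,y)\le\delta\Rightarrow d(f x,f y)\le\epsilon$; coarse equivalences are coarse maps with coarse inverses up to bounded distance. *)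

theory Defs
  imports Main "HOL.Real"
begin

definition dyadic :: "rat set" where
  "dyadic = {of_int m / 2 ^ k | m k. True}"

text \<open>Z(2^infinity) = Z[1/2]/Z, represented by the coset representatives in [0,1),
  with addition modulo 1; the quotient map Z[1/2] -> Z[1/2]/Z is frac.\<close>
definition pruefer2 :: "rat set" where
  "pruefer2 = frac ` dyadic"

definition padd :: "rat \<Rightarrow> rat \<Rightarrow> rat" where
  "padd x y = frac (x + y)"

definition pneg :: "rat \<Rightarrow> rat" where
  "pneg x = frac (- x)"

definition proper_norm ::
  "'a set \<Rightarrow> ('a \<Rightarrow> 'a \<Rightarrow> 'a) \<Rightarrow> ('a \<Rightarrow> 'a) \<Rightarrow> 'a \<Rightarrow> ('a \<Rightarrow> real) \<Rightarrow> bool" where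
  "proper_norm S pl ng z n \<longleftrightarrow>
     (\<forall>g\<in>S. n g = 0 \<longleftrightarrow> g = z) \<and>
     (\<forall>g\<in>S. n (ng g) = n g) \<and>
     (\<forall>g\<in>S. \<forall>h\<in>S. n (pl g h) \<le> n g + n h) \<and>
     (\<forall>r::real. finite {g\<in>S. n g \<le> r})"

definition norm_metric ::
  "('a \<Rightarrow> 'a \<Rightarrow> 'a) \<Rightarrow> ('a \<Rightarrow> 'a) \<Rightarrow> ('a \<Rightarrow> real) \<Rightarrow> 'a \<Rightarrow> 'a \<Rightarrow> real" where
  "norm_metric pl ng n g h = n (pl (ng g) h)"

definition coarse_map ::
  "'a set \<Rightarrow> ('a \<Rightarrow> 'a \<Rightarrow> real) \<Rightarrow> 'b set \<Rightarrow> ('b \<Rightarrow> 'b \<Rightarrow> real) \<Rightarrow> ('a \<Rightarrow> 'b) \<Rightarrow> bool" where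
  "coarse_map X dX Y dY f \<longleftrightarrow>
     (\<forall>x\<in>X. f x \<in> Y) \<and>
     (\<forall>\<delta>. \<exists>\<epsilon>. \<forall>x\<in>X. \<forall>y\<in>X. dX x y \<le> \<delta> \<longrightarrow> dY (f x) (f y) \<le> \<epsilon>)"

definition bounded_distance ::
  "'a set \<Rightarrow> ('b \<Rightarrow> 'b \<Rightarrow> real) \<Rightarrow> ('a \<Rightarrow> 'b) \<Rightarrow> ('a \<Rightarrow> 'b) \<Rightarrow> bool" where
  "bounded_distance X dY f g \<longleftrightarrow> (\<exists>C. \<forall>x\<in>X. dY (f x) (g x) \<le> C)"

definition coarse_equivalence ::
  "'a set \<Rightarrow> ('a \<Rightarrow> 'a \<Rightarrow> real) \<Rightarrow> 'b set \<Rightarrow> ('b \<Rightarrow> 'b \<Rightarrow> real) \<Rightarrow> ('a \<Rightarrow> 'b) \<Rightarrow> bool" where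
  "coarse_equivalence X dX Y dY f \<longleftrightarrow>
     coarse_map X dX Y dY f \<and>
     (\<exists>g. coarse_map Y dY X dX g \<and>
          bounded_distance X dX (g \<circ> f) id \<and>
          bounded_distance Y dY (f \<circ> g) id)"

text \<open>K = int (all of it), G = dyadic with +, Q = pruefer2 with padd;
  i = of_int, pi = frac.  The l1 sum metric on K x Q.\<close>
definition coarsely_split_with :: "(int \<Rightarrow> real) \<Rightarrow> bool" where
  "coarsely_split_with nK \<longleftrightarrow>
     proper_norm UNIV (+) uminus 0 nK \<and>
     (\<exists>nG nQ (f :: rat \<Rightarrow> int \<times> rat).
        proper_norm dyadic (+) uminus 0 nG \<and>
        proper_norm pruefer2 padd pneg 0 nQ \<and>
        (let dK = norm_metric (+) uminus nK;
             dG = norm_metric (+) uminus nG;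
             dQ = norm_metric padd pneg nQ;
             dKQ = (\<lambda>(a, p) (b, q). dK a b + dQ p q)
         in coarse_equivalence dyadic dG (UNIV \<times> pruefer2) dKQ f \<and>
            bounded_distance UNIV dKQ (\<lambda>k. f (of_int k)) (\<lambda>k. (k, 0)) \<and>
            bounded_distance dyadic dQ (\<lambda>x. snd (f x)) frac))"

definition coarsely_split :: bool where
  "coarsely_split \<longleftrightarrow> (\<exists>nK. coarsely_split_with nK)"

end

theory Submission
  imports Defs
begin

definition vv :: "rat \<Rightarrow> nat" where
  "vv p = (LEAST k. p * 2 ^ k \<in> \<int>)"

lemma dyadic_alt: "dyadic = {p. \<exists>k::nat. p * 2 ^ k \<in> \<int>}"
proof (intro set_eqI iffI)
  fix p :: rat assume "p \<in> dyadic"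
  then obtain m k where "p = of_int m / 2 ^ k" unfolding dyadic_def by auto
  then have "p * 2 ^ k = of_int m" by simp
  then show "p \<in> {p. \<exists>k::nat. p * 2 ^ k \<in> \<int>}" by (metis (mono_tags) CollectI Ints_of_int)
next
  fix p :: rat assume "p \<in> {p. \<exists>k::nat. p * 2 ^ k \<in> \<int>}"
  then obtain k m where "p * 2 ^ k = of_int m" by (auto elim: Ints_cases)
  then have "p = of_int m / 2 ^ k" by (simp add: field_simps)
  then show "p \<in> dyadic" unfolding dyadic_def by auto
qed

lemma vv_I: "p \<in> dyadic \<Longrightarrow> p * 2 ^ vv p \<in> \<int>"
  unfolding dyadic_alt vv_def by (auto intro: LeastI_ex)

lemma vv_le: "p * 2 ^ k \<in> \<int> \<Longrightarrow> vv p \<le> k"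
  unfolding vv_def by (rule Least_le)

lemma Ints_mono2: "p * 2 ^ a \<in> \<int> \<Longrightarrow> a \<le> b \<Longrightarrow> (p::rat) * 2 ^ b \<in> \<int>"
proof -
  assume h: "p * 2 ^ a \<in> \<int>" "a \<le> b"
  have "(2::rat) ^ b = 2 ^ a * 2 ^ (b - a)"
    using h(2) by (simp add: power_add[symmetric])
  then have e: "p * 2 ^ b = (p * 2 ^ a) * of_int (2 ^ (b - a))" by simp
  show ?thesis unfolding e using h(1) Ints_mult Ints_of_int by blast
qed

lemma vv_le_iff: "p \<in> dyadic \<Longrightarrow> vv p \<le> n \<longleftrightarrow> p * 2 ^ n \<in> \<int>"
  using vv_I vv_le Ints_mono2 by blast

lemma shift_Ints: "((p::rat) + of_int n) * 2 ^ k \<in> \<int> \<longleftrightarrow> p * 2 ^ k \<in> \<int>"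
proof -
  have e: "(p + of_int n) * 2 ^ k = p * 2 ^ k + of_int (n * 2 ^ k)" by (simp add: algebra_simps)
  show ?thesis
  proof
    assume "(p + of_int n) * 2 ^ k \<in> \<int>"
    then have "(p + of_int n) * 2 ^ k - of_int (n * 2 ^ k) \<in> \<int>" by simp
    then show "p * 2 ^ k \<in> \<int>" using e by simp
  next
    assume "p * 2 ^ k \<in> \<int>" then show "(p + of_int n) * 2 ^ k \<in> \<int>" using e by simp
  qed
qed

lemma vv_shift: "vv (p + of_int n) = vv p"
  unfolding vv_def using shift_Ints by presburger

lemma neg_Ints: "(- (p::rat)) * 2 ^ k \<in> \<int> \<longleftrightarrow> p * 2 ^ k \<in> \<int>"
  by (metis Ints_minus minus_minus mult_minus_left)

lemma vv_neg: "vv (- p) = vv p"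
  unfolding vv_def using neg_Ints by presburger

lemma vv_frac: "vv (frac p) = vv p"
proof -
  have "vv (p + of_int (- \<lfloor>p\<rfloor>)) = vv p" by (rule vv_shift)
  then show ?thesis by (simp add: frac_def)
qed

lemma vv_zero: "vv 0 = 0"
  using vv_le[of 0 0] by simp

lemma vv_int: "vv (of_int n) = 0"
  using vv_shift[of 0 n] vv_zero by simp

lemma dyadic_add: "p \<in> dyadic \<Longrightarrow> q \<in> dyadic \<Longrightarrow> p + q \<in> dyadic"
proof -
  assume "p \<in> dyadic" "q \<in> dyadic"
  then have a: "p * 2 ^ (vv p + vv q) \<in> \<int>" "q * 2 ^ (vv p + vv q) \<in> \<int>"
    using vv_I Ints_mono2 le_add1 le_add2 by blast+
  have "(p + q) * 2 ^ (vv p + vv q) \<in> \<int>" using a by (simp add: distrib_right)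
  then show ?thesis unfolding dyadic_alt by blast
qed

lemma dyadic_neg: "p \<in> dyadic \<Longrightarrow> - p \<in> dyadic"
  unfolding dyadic_alt using neg_Ints by blast

lemma dyadic_int: "of_int n \<in> dyadic"
  unfolding dyadic_alt by (rule CollectI, rule exI[of _ 0], simp)

lemma dyadic_frac: "p \<in> dyadic \<Longrightarrow> frac p \<in> dyadic"
  unfolding frac_def using dyadic_add dyadic_neg dyadic_int by (metis diff_conv_add_uminus)

lemma pruefer_dyadic: "p \<in> pruefer2 \<Longrightarrow> p \<in> dyadic"
  unfolding pruefer2_def using dyadic_frac by auto

lemma pruefer_bounds: "p \<in> pruefer2 \<Longrightarrow> 0 \<le> p \<and> p < 1"
  unfolding pruefer2_def by (auto simp: frac_lt_1)

lemma vv_add: "p \<in> dyadic \<Longrightarrow> q \<in> dyadic \<Longrightarrow> vv (p + q) \<le> vv p + vv q"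
proof -
  assume "p \<in> dyadic" "q \<in> dyadic"
  then have a: "p * 2 ^ (vv p + vv q) \<in> \<int>" "q * 2 ^ (vv p + vv q) \<in> \<int>"
    using vv_I Ints_mono2 le_add1 le_add2 by blast+
  have "(p + q) * 2 ^ (vv p + vv q) \<in> \<int>" using a by (simp add: distrib_right)
  then show ?thesis by (rule vv_le)
qed

lemma finite_grid: "finite {z::rat. z * 2 ^ n \<in> \<int> \<and> \<bar>z\<bar> \<le> R}"
proof -
  define M where "M = \<lceil>R * 2 ^ n\<rceil>"
  have "{z::rat. z * 2 ^ n \<in> \<int> \<and> \<bar>z\<bar> \<le> R} \<subseteq> (\<lambda>m. of_int m / 2 ^ n) ` {-M..M}"
  proof
    fix z :: rat assume "z \<in> {z::rat. z * 2 ^ n \<in> \<int> \<and> \<bar>z\<bar> \<le> R}"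
    then obtain m where m: "z * 2 ^ n = of_int m" and zr: "\<bar>z\<bar> \<le> R" by (auto elim: Ints_cases)
    have "\<bar>z * 2 ^ n\<bar> = \<bar>of_int m\<bar>" using m by simp
    then have "\<bar>of_int m\<bar> = \<bar>z\<bar> * 2 ^ n" by (simp add: abs_mult)
    also have "\<dots> \<le> R * 2 ^ n" using zr by simp
    finally have "\<bar>of_int m :: rat\<bar> \<le> R * 2 ^ n" .
    then have "of_int \<bar>m\<bar> \<le> R * 2 ^ n" by (simp only: of_int_abs)
    then have "(of_int \<bar>m\<bar> :: rat) \<le> of_int M" unfolding M_def
      using le_of_int_ceiling order_trans by blast
    then have "\<bar>m\<bar> \<le> M" by (simp only: of_int_le_iff)
    moreover have "z = of_int m / 2 ^ n" using m by (simp add: field_simps)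
    ultimately have "m \<in> {-M..M}" "z = of_int m / 2 ^ n" by (auto simp: abs_le_iff)
    then show "z \<in> (\<lambda>m. of_int m / 2 ^ n) ` {-M..M}" by (simp only: image_eqI)
  qed
  then show ?thesis by (rule finite_subset) simp
qed

lemma floor_diff_bound:
  "real_of_int \<bar>\<lfloor>y\<rfloor> - \<lfloor>x\<rfloor>\<bar> \<le> real_of_rat \<bar>y - x\<bar> + 1"
proof -
  have "\<bar>of_int (\<lfloor>y\<rfloor> - \<lfloor>x\<rfloor>) :: rat\<bar> \<le> \<bar>y - x\<bar> + 1"
  proof -
    have "of_int \<lfloor>y\<rfloor> \<le> y" "y < of_int \<lfloor>y\<rfloor> + 1" "of_int \<lfloor>x\<rfloor> \<le> x" "x < of_int \<lfloor>x\<rfloor> + 1"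
      by linarith+
    then show ?thesis unfolding of_int_diff abs_le_iff by linarith
  qed
  then have "of_int \<bar>\<lfloor>y\<rfloor> - \<lfloor>x\<rfloor>\<bar> \<le> \<bar>y - x\<bar> + (1::rat)"
    by (simp only: of_int_abs)
  then have "real_of_rat (of_int \<bar>\<lfloor>y\<rfloor> - \<lfloor>x\<rfloor>\<bar>) \<le> real_of_rat (\<bar>y - x\<bar> + 1)"
    using of_rat_less_eq by blast
  then show ?thesis by (simp only: of_rat_of_int_eq of_rat_add of_rat_1)
qed

lemma dQ_eq: "vv (frac (frac (- p) + q)) = vv (q - p)"
proof -
  have e: "frac (- p) + q = (q - p) + of_int (- \<lfloor>- p\<rfloor>)" by (simp add: frac_def)
  have "vv (frac (- p) + q) = vv (q - p)" unfolding e by (rule vv_shift)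
  then show ?thesis by (metis vv_frac)
qed

lemma int_norm: "proper_norm UNIV (+) uminus 0 (\<lambda>k::int. real_of_int \<bar>k\<bar>)"
  unfolding proper_norm_def
proof (intro conjI ballI allI)
  fix r :: real
  have "{g::int. g \<in> UNIV \<and> real_of_int \<bar>g\<bar> \<le> r} \<subseteq> {-\<lceil>r\<rceil>..\<lceil>r\<rceil>}"
    by (auto simp: abs_le_iff) (linarith+)
  then show "finite {g::int. g \<in> UNIV \<and> real_of_int \<bar>g\<bar> \<le> r}"
    by (rule finite_subset) simp
qed auto

lemma nQ_norm: "proper_norm pruefer2 padd pneg 0 (\<lambda>p. real (vv p))"
  unfolding proper_norm_def
proof (intro conjI ballI allI)
  fix g assume g: "g \<in> pruefer2"
  show "(real (vv g) = 0) = (g = 0)"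
  proof
    assume "real (vv g) = 0"
    then have "g * 2 ^ 0 \<in> \<int>" using vv_I[OF pruefer_dyadic[OF g]] by simp
    then obtain m where m: "g = of_int m" by (auto elim: Ints_cases)
    with pruefer_bounds[OF g] have "m = 0" by simp
    then show "g = 0" using m by simp
  qed (simp add: vv_zero)
  show "real (vv (pneg g)) = real (vv g)" by (simp add: pneg_def vv_frac vv_neg)
next
  fix g h assume g: "g \<in> pruefer2" and h: "h \<in> pruefer2"
  show "real (vv (padd g h)) \<le> real (vv g) + real (vv h)"
    using vv_add[OF pruefer_dyadic[OF g] pruefer_dyadic[OF h]] by (simp add: padd_def vv_frac)
next
  fix r :: real
  define N where "N = nat \<lceil>r\<rceil>"
  have "{g \<in> pruefer2. real (vv g) \<le> r} \<subseteq> {z::rat. z * 2 ^ N \<in> \<int> \<and> \<bar>z\<bar> \<le> 1}"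
  proof
    fix z assume z: "z \<in> {g \<in> pruefer2. real (vv g) \<le> r}"
    then have "vv z \<le> N" unfolding N_def by (simp) linarith
    then have "z * 2 ^ N \<in> \<int>" using vv_le_iff pruefer_dyadic z by blast
    moreover have "z \<in> pruefer2" using z by simp
    then have "\<bar>z\<bar> \<le> 1" using pruefer_bounds[of z] by auto
    ultimately show "z \<in> {z::rat. z * 2 ^ N \<in> \<int> \<and> \<bar>z\<bar> \<le> 1}" by simp
  qed
  then show "finite {g \<in> pruefer2. real (vv g) \<le> r}"
    using finite_grid finite_subset by blast
qed

lemma nG_norm: "proper_norm dyadic (+) uminus 0 (\<lambda>z. real_of_rat \<bar>z\<bar> + real (vv z))"
  unfolding proper_norm_def
proof (intro conjI ballI allI)
  fix g assume g: "g \<in> dyadic"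
  show "(real_of_rat \<bar>g\<bar> + real (vv g) = 0) = (g = 0)"
  proof
    assume "real_of_rat \<bar>g\<bar> + real (vv g) = 0"
    moreover have "real_of_rat \<bar>g\<bar> \<ge> 0" by simp
    ultimately have "real_of_rat \<bar>g\<bar> = 0" by linarith
    then show "g = 0" by simp
  qed (simp add: vv_zero)
  show "real_of_rat \<bar>- g\<bar> + real (vv (- g)) = real_of_rat \<bar>g\<bar> + real (vv g)"
    by (simp add: vv_neg)
next
  fix g h assume g: "g \<in> dyadic" and h: "h \<in> dyadic"
  have "real_of_rat \<bar>g + h\<bar> \<le> real_of_rat \<bar>g\<bar> + real_of_rat \<bar>h\<bar>"
    by (metis abs_triangle_ineq of_rat_add of_rat_less_eq)
  then show "real_of_rat \<bar>g + h\<bar> + real (vv (g + h)) \<le>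
      real_of_rat \<bar>g\<bar> + real (vv g) + (real_of_rat \<bar>h\<bar> + real (vv h))"
    using vv_add[OF g h] by linarith
next
  fix r :: real
  define N where "N = nat \<lceil>r\<rceil>"
  have "{g \<in> dyadic. real_of_rat \<bar>g\<bar> + real (vv g) \<le> r}
     \<subseteq> {z::rat. z * 2 ^ N \<in> \<int> \<and> \<bar>z\<bar> \<le> of_int \<lceil>r\<rceil>}"
  proof
    fix z assume z: "z \<in> {g \<in> dyadic. real_of_rat \<bar>g\<bar> + real (vv g) \<le> r}"
    have nn: "real_of_rat \<bar>z\<bar> \<ge> 0" by simp
    have zr: "real_of_rat \<bar>z\<bar> + real (vv z) \<le> r" and zd: "z \<in> dyadic" using z by auto
    have "real (vv z) \<le> r" using zr nn by linarith
    then have "vv z \<le> N" unfolding N_def by linarith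
    then have "z * 2 ^ N \<in> \<int>" using vv_le_iff zd by blast
    moreover have "real_of_rat \<bar>z\<bar> \<le> real_of_rat (of_int \<lceil>r\<rceil>)"
      using zr by simp linarith
    then have "\<bar>z\<bar> \<le> of_int \<lceil>r\<rceil>" using of_rat_less_eq by blast
    ultimately show "z \<in> {z::rat. z * 2 ^ N \<in> \<int> \<and> \<bar>z\<bar> \<le> of_int \<lceil>r\<rceil>}" by simp
  qed
  then show "finite {g \<in> dyadic. real_of_rat \<bar>g\<bar> + real (vv g) \<le> r}"
    using finite_grid finite_subset by blast
qed

lemma vv_fracdiff: "vv (frac y - frac x) = vv (y - x)"
proof -
  have e: "frac y - frac x = (y - x) + of_int (\<lfloor>x\<rfloor> - \<lfloor>y\<rfloor>)" by (simp add: frac_def)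
  show ?thesis unfolding e by (rule vv_shift)
qed

lemma vv_gdiff: "vv (- (of_int a + p) + (of_int b + q)) = vv (q - p)"
proof -
  have e: "- (of_int a + p) + (of_int b + q) = (q - p) + of_int (b - a)" by simp
  show ?thesis unfolding e by (rule vv_shift)
qed

lemma g_abs: "0 \<le> p \<Longrightarrow> p < 1 \<Longrightarrow> 0 \<le> q \<Longrightarrow> q < 1 \<Longrightarrow>
  real_of_rat \<bar>- (of_int a + p) + (of_int b + q)\<bar> \<le> real_of_int \<bar>- a + b\<bar> + 1"
proof -
  assume "0 \<le> p" "p < 1" "0 \<le> q" "q < 1"
  then have "\<bar>- (of_int a + p) + (of_int b + q)\<bar> \<le> of_int \<bar>- a + b\<bar> + (1::rat)"
    by (simp add: abs_le_iff) linarith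
  then have "real_of_rat \<bar>- (of_int a + p) + (of_int b + q)\<bar> \<le> real_of_rat (of_int \<bar>- a + b\<bar> + 1)"
    using of_rat_less_eq by blast
  then show ?thesis by (metis of_rat_add of_rat_of_int_eq of_rat_1)
qed

theorem mainTheorem16:
  shows "coarsely_split \<and> coarsely_split_with (\<lambda>k. real_of_int \<bar>k\<bar>)"
proof -
  define nG where "nG = (\<lambda>z. real_of_rat \<bar>z\<bar> + real (vv z))"
  define nQ where "nQ = (\<lambda>p. real (vv p))"
  define f where "f = (\<lambda>x::rat. (\<lfloor>x\<rfloor>, frac x))"
  define g where "g = (\<lambda>(a::int, p::rat). of_int a + p)"
  define dKQ where "dKQ = (\<lambda>(a, p) (b, q). norm_metric (+) uminus (\<lambda>k::int. real_of_int \<bar>k\<bar>) a b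
     + norm_metric padd pneg nQ p q)"
  define dG where "dG = norm_metric (+) uminus nG"
  have dKQ_eq: "\<And>a p b q. dKQ (a,p) (b,q) = real_of_int \<bar>-a+b\<bar> + real (vv (q - p))"
    by (simp add: dKQ_def norm_metric_def padd_def pneg_def nQ_def dQ_eq vv_frac)
  have dG_eq: "\<And>x y. dG x y = real_of_rat \<bar>-x+y\<bar> + real (vv (-x+y))"
    by (simp add: dG_def norm_metric_def nG_def)
  have dQ_eq2: "\<And>p q. norm_metric padd pneg nQ p q = real (vv (q - p))"
    by (simp add: norm_metric_def padd_def pneg_def nQ_def dQ_eq vv_frac)
  have fmap: "\<forall>x\<in>dyadic. f x \<in> (UNIV::int set) \<times> pruefer2"
    unfolding f_def pruefer2_def by auto
  have gmap: "\<forall>y\<in>(UNIV::int set) \<times> pruefer2. g y \<in> dyadic"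
    unfolding g_def using dyadic_add dyadic_int pruefer_dyadic by auto
  have fco: "\<forall>\<delta>. \<exists>\<epsilon>. \<forall>x\<in>dyadic. \<forall>y\<in>dyadic. dG x y \<le> \<delta> \<longrightarrow> dKQ (f x) (f y) \<le> \<epsilon>"
  proof (intro allI exI[of _ "_ + 1"] ballI impI)
    fix \<delta> x y assume "dG x y \<le> \<delta>"
    then have h: "real_of_rat \<bar>-x+y\<bar> + real (vv (-x+y)) \<le> \<delta>" by (simp add: dG_eq)
    have "real_of_int \<bar>\<lfloor>y\<rfloor> - \<lfloor>x\<rfloor>\<bar> \<le> real_of_rat \<bar>y - x\<bar> + 1" by (rule floor_diff_bound)
    moreover have "vv (frac y - frac x) = vv (-x+y)" using vv_fracdiff by simp
    ultimately show "dKQ (f x) (f y) \<le> \<delta> + 1" using h by (simp add: f_def dKQ_eq)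
  qed
  have gco: "\<forall>\<delta>. \<exists>\<epsilon>. \<forall>x\<in>(UNIV::int set) \<times> pruefer2. \<forall>y\<in>(UNIV::int set) \<times> pruefer2. dKQ x y \<le> \<delta> \<longrightarrow> dG (g x) (g y) \<le> \<epsilon>"
  proof (intro allI exI[of _ "_ + 1"] ballI impI)
    fix \<delta> x y assume x: "x \<in> (UNIV::int set) \<times> pruefer2" and y: "y \<in> (UNIV::int set) \<times> pruefer2" and d: "dKQ x y \<le> \<delta>"
    obtain a :: int and p :: rat where xe: "x = (a, p)" by fastforce
    obtain b :: int and q :: rat where ye: "y = (b, q)" by fastforce
    have p: "0 \<le> p" "p < 1" using x xe pruefer_bounds by auto
    have q: "0 \<le> q" "q < 1" using y ye pruefer_bounds by auto
    have "real_of_int \<bar>-a+b\<bar> + real (vv (q - p)) \<le> \<delta>" using d by (simp add: xe ye dKQ_eq)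
    moreover note g_abs[OF p q, of a b]
    moreover have "dG (g x) (g y) = real_of_rat \<bar>- (of_int a + p) + (of_int b + q)\<bar> + real (vv (q - p))"
      by (simp only: xe ye g_def case_prod_conv dG_eq vv_gdiff)
    ultimately show "dG (g x) (g y) \<le> \<delta> + 1" by linarith
  qed
  have gf: "\<forall>x\<in>dyadic. dG ((g \<circ> f) x) (id x) \<le> 0"
    by (simp add: g_def f_def dG_eq frac_def vv_zero)
  have fg: "\<forall>y\<in>(UNIV::int set) \<times> pruefer2. dKQ ((f \<circ> g) y) (id y) \<le> 0"
  proof
    fix y assume y: "y \<in> (UNIV::int set) \<times> pruefer2"
    obtain b :: int and q :: rat where ye: "y = (b, q)" by fastforce
    have q: "0 \<le> q" "q < 1" using y ye pruefer_bounds by auto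
    have "\<lfloor>of_int b + q\<rfloor> = b" using q by linarith
    moreover have "frac (of_int b + q) = q" using q by (simp add: frac_def) linarith
    ultimately show "dKQ ((f \<circ> g) y) (id y) \<le> 0"
      by (simp add: ye f_def g_def dKQ_eq vv_zero)
  qed
  have bd1: "\<forall>k::int\<in>UNIV. dKQ (f (of_int k)) (k, 0) \<le> 0"
    by (simp add: f_def dKQ_eq vv_zero)
  have bd2: "\<forall>x\<in>dyadic. norm_metric padd pneg nQ (snd (f x)) (frac x) \<le> 0"
    by (simp add: f_def dQ_eq2 vv_zero)
  have pG: "proper_norm dyadic (+) uminus 0 nG" unfolding nG_def by (rule nG_norm)
  have pQ: "proper_norm pruefer2 padd pneg 0 nQ" unfolding nQ_def by (rule nQ_norm)
  have W: "coarsely_split_with (\<lambda>k. real_of_int \<bar>k\<bar>)"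
    unfolding coarsely_split_with_def Let_def
    apply (rule conjI, rule int_norm, rule exI[of _ nG], rule exI[of _ nQ], rule exI[of _ f])
    apply (intro conjI pG pQ)
    unfolding dKQ_def[symmetric] dG_def[symmetric]
      coarse_equivalence_def coarse_map_def bounded_distance_def
    apply (intro conjI exI[of _ g] exI[of _ 0])
    by (fact fmap | fact fco | fact gmap | fact gco | fact gf | fact fg | (rule exI[of _ 0], fact bd1) | (rule exI[of _ 0], fact bd2))+
  show ?thesis using W coarsely_split_def by blast
qed

end
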